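(* Let $K$ be an infinite field and let $f_1,\dots,f_r \in K[x_1,\dots,x_n]$ be homogeneous polynomials, where $f_1$ has degree $d\ge 1$ and its support contains $x_i^d$ for some $i$. Let $Z \subseteq \mathbb{A}^n$ be the closed subscheme defined by the ideal generated by $S_n.f_1 \cup \dots \cup S_n.f_r$. Then for general coefficients of $f_1$ with respect to its support, $Z$ is set-theoretically equal to $\{0\}$ (i.e., the radical of its defining ideal contains $(x_1,\dots,x_n)$), and the corresponding subscheme of $\mathbb{P}^{n-1}$ is empty.
   Context: $S_n$ acts on $K[x_1,\dots,x_n]$ by permuting the variables, $\sigma.x_i = x_{\sigma(i)}$, and $S_n.f$ denotes the orbit of $f$. The support of a polynomial is its set of monomials with nonzero coefficient. "For general coefficients of $f_1$ with respect to its support $\mathcal{A}$" means: the set of polynomials with support contained in $\mathcal{A}$ for which the assertion holds contains a non-empty Zariski-open subset of $K^{\mathcal{A}}$ (the space of such coefficient vectors). *)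

theory Defs
  imports Main "HOL-Library.Poly_Mapping" "HOL-Combinatorics.Permutations"
begin

text \<open>Variables are indexed 0,1,2,...; the polynomial ring K[x_1..x_n] consists of the
polynomials all of whose monomials only involve variables with index < n.\<close>

type_synonym monom = "nat \<Rightarrow>\<^sub>0 nat"
type_synonym 'a mpoly = "monom \<Rightarrow>\<^sub>0 'a"

definition mon_vars_in :: "nat \<Rightarrow> monom \<Rightarrow> bool" where
  "mon_vars_in n \<alpha> \<longleftrightarrow> (\<forall>j\<in>Poly_Mapping.keys \<alpha>. j < n)"

definition poly_vars_in :: "nat \<Rightarrow> 'a::zero mpoly \<Rightarrow> bool" where
  "poly_vars_in n p \<longleftrightarrow> (\<forall>\<alpha>\<in>Poly_Mapping.keys p. mon_vars_in n \<alpha>)"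

definition support :: "'a::zero mpoly \<Rightarrow> monom set" where
  "support p = Poly_Mapping.keys p"

definition mdeg :: "monom \<Rightarrow> nat" where
  "mdeg \<alpha> = (\<Sum>j\<in>Poly_Mapping.keys \<alpha>. Poly_Mapping.lookup \<alpha> j)"

definition homogeneous :: "nat \<Rightarrow> 'a::zero mpoly \<Rightarrow> bool" where
  "homogeneous d p \<longleftrightarrow> (\<forall>\<alpha>\<in>Poly_Mapping.keys p. mdeg \<alpha> = d)"

definition Var :: "nat \<Rightarrow> 'a::{zero,one} mpoly" where
  "Var j = Poly_Mapping.single (Poly_Mapping.single j 1) 1"

definition Mon :: "monom \<Rightarrow> 'a::zero \<Rightarrow> 'a mpoly" where
  "Mon \<alpha> c = Poly_Mapping.single \<alpha> c"

definition perm_act :: "(nat \<Rightarrow> nat) \<Rightarrow> 'a::comm_ring_1 mpoly \<Rightarrow> 'a mpoly" where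
  "perm_act \<sigma> p = (\<Sum>\<alpha>\<in>Poly_Mapping.keys p. Mon 0 (Poly_Mapping.lookup p \<alpha>) * (\<Prod>j\<in>Poly_Mapping.keys \<alpha>. Var (\<sigma> j) ^ Poly_Mapping.lookup \<alpha> j))"

definition orbit :: "nat \<Rightarrow> 'a::comm_ring_1 mpoly \<Rightarrow> 'a mpoly set" where
  "orbit n f = {perm_act \<sigma> f | \<sigma>. \<sigma> permutes {..<n}}"

definition ideal_gen :: "nat \<Rightarrow> 'a::comm_ring_1 mpoly set \<Rightarrow> 'a mpoly set" where
  "ideal_gen n G = {(\<Sum>g\<in>F. h g * g) | F h. finite F \<and> F \<subseteq> G \<and> (\<forall>g\<in>F. poly_vars_in n (h g))}"

definition radical_contains_irrelevant :: "nat \<Rightarrow> 'a::comm_ring_1 mpoly set \<Rightarrow> bool" where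
  "radical_contains_irrelevant n I \<longleftrightarrow> (\<forall>j<n. \<exists>k. Var j ^ k \<in> I)"

text \<open>Coefficient space K^A: a point is a function c on monomials (only values on A matter).
Polynomial functions on K^A are polynomials whose variables are indexed by monomials in A.\<close>
definition coord_poly_in :: "monom set \<Rightarrow> ((monom \<Rightarrow>\<^sub>0 nat) \<Rightarrow>\<^sub>0 'a::zero) \<Rightarrow> bool" where
  "coord_poly_in A g \<longleftrightarrow> (\<forall>\<mu>\<in>Poly_Mapping.keys g. Poly_Mapping.keys \<mu> \<subseteq> A)"

definition coord_eval :: "((monom \<Rightarrow>\<^sub>0 nat) \<Rightarrow>\<^sub>0 'a::comm_ring_1) \<Rightarrow> (monom \<Rightarrow> 'a) \<Rightarrow> 'a" where
  "coord_eval g c = (\<Sum>\<mu>\<in>Poly_Mapping.keys g. Poly_Mapping.lookup g \<mu> * (\<Prod>v\<in>Poly_Mapping.keys \<mu>. c v ^ Poly_Mapping.lookup \<mu> v))"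

text \<open>A property P of coefficient vectors holds for general coefficients on A: the set where
it holds contains a nonempty Zariski-open subset of K^A; equivalently it contains a nonempty
basic open set D(g) = {c. g(c) \<noteq> 0}.\<close>
definition holds_generally :: "monom set \<Rightarrow> ((monom \<Rightarrow> 'a::comm_ring_1) \<Rightarrow> bool) \<Rightarrow> bool" where
  "holds_generally A P \<longleftrightarrow>
     (\<exists>g. coord_poly_in A g \<and> (\<exists>c. coord_eval g c \<noteq> 0) \<and> (\<forall>c. coord_eval g c \<noteq> 0 \<longrightarrow> P c))"

definition poly_of_coeffs :: "monom set \<Rightarrow> (monom \<Rightarrow> 'a::comm_ring_1) \<Rightarrow> 'a mpoly" where
  "poly_of_coeffs A c = (\<Sum>\<alpha>\<in>A. Mon \<alpha> (c \<alpha>))"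

end

theory Submission
  imports Defs "Jordan_Normal_Form.Determinant"
begin


type_synonym cmon = "monom \<Rightarrow>\<^sub>0 nat"

definition ev :: "cmon \<Rightarrow> (monom \<Rightarrow> 'a::comm_ring_1) \<Rightarrow> 'a" where
  "ev \<mu> c = (\<Prod>v\<in>Poly_Mapping.keys \<mu>. c v ^ Poly_Mapping.lookup \<mu> v)"

lemma ev_superset:
  assumes "finite S" "Poly_Mapping.keys \<mu> \<subseteq> S"
  shows "ev \<mu> c = (\<Prod>v\<in>S. c v ^ Poly_Mapping.lookup \<mu> v)"
  unfolding ev_def
  by (rule prod.mono_neutral_left) (auto simp: assms in_keys_iff)

lemma ev_add: "ev (\<mu> + \<nu>) c = ev \<mu> c * ev \<nu> c"
proof -
  let ?S = "Poly_Mapping.keys \<mu> \<union> Poly_Mapping.keys \<nu>"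
  have "ev (\<mu> + \<nu>) c = (\<Prod>v\<in>?S. c v ^ Poly_Mapping.lookup (\<mu>+\<nu>) v)"
    by (rule ev_superset) (auto simp: keys_add)
  also have "\<dots> = (\<Prod>v\<in>?S. c v ^ Poly_Mapping.lookup \<mu> v) * (\<Prod>v\<in>?S. c v ^ Poly_Mapping.lookup \<nu> v)"
    by (simp add: lookup_add power_add prod.distrib)
  also have "\<dots> = ev \<mu> c * ev \<nu> c"
    by (subst (1 2) ev_superset[of ?S]) auto
  finally show ?thesis .
qed

lemma ev_zero[simp]: "ev 0 c = 1" by (simp add: ev_def)

lemma ev_single[simp]: "ev (Poly_Mapping.single v k) c = c v ^ k" by (simp add: ev_def)

lemma coord_eval_superset:
  assumes "finite S" "Poly_Mapping.keys g \<subseteq> S"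
  shows "coord_eval g c = (\<Sum>\<mu>\<in>S. Poly_Mapping.lookup g \<mu> * ev \<mu> c)"
  unfolding coord_eval_def ev_def[symmetric]
  by (rule sum.mono_neutral_left) (auto simp: assms in_keys_iff)

lemma coord_eval_add: "coord_eval (g + h) c = coord_eval g c + coord_eval h c"
proof -
  let ?S = "Poly_Mapping.keys g \<union> Poly_Mapping.keys h"
  have "coord_eval (g + h) c = (\<Sum>\<mu>\<in>?S. Poly_Mapping.lookup (g+h) \<mu> * ev \<mu> c)"
    by (rule coord_eval_superset) (auto simp: keys_add)
  also have "\<dots> = (\<Sum>\<mu>\<in>?S. Poly_Mapping.lookup g \<mu> * ev \<mu> c) + (\<Sum>\<mu>\<in>?S. Poly_Mapping.lookup h \<mu> * ev \<mu> c)"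
    by (simp add: lookup_add distrib_right sum.distrib)
  also have "\<dots> = coord_eval g c + coord_eval h c"
    by (subst (1 2) coord_eval_superset[of ?S]) auto
  finally show ?thesis .
qed

lemma coord_eval_zero[simp]: "coord_eval 0 c = 0" by (simp add: coord_eval_def)

lemma coord_eval_sum: "coord_eval (\<Sum>i\<in>I. G i) c = (\<Sum>i\<in>I. coord_eval (G i) c)"
  by (induction I rule: infinite_finite_induct) (auto simp: coord_eval_add)

lemma coord_eval_single: "coord_eval (Poly_Mapping.single \<mu> a) c = a * ev \<mu> c"
  by (simp add: coord_eval_def ev_def)

lemma pm_expand: "(g::'b \<Rightarrow>\<^sub>0 'c::comm_monoid_add) = (\<Sum>\<mu>\<in>Poly_Mapping.keys g. Poly_Mapping.single \<mu> (Poly_Mapping.lookup g \<mu>))"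
proof (rule poly_mapping_eqI)
  fix k
  show "Poly_Mapping.lookup g k = Poly_Mapping.lookup (\<Sum>\<mu>\<in>Poly_Mapping.keys g. Poly_Mapping.single \<mu> (Poly_Mapping.lookup g \<mu>)) k"
    by (simp add: lookup_sum lookup_single when_def in_keys_iff)
qed

lemma coord_eval_mult: "coord_eval (g * h) c = coord_eval g c * coord_eval h c"
proof -
  have "g * h = (\<Sum>\<mu>\<in>Poly_Mapping.keys g. Poly_Mapping.single \<mu> (Poly_Mapping.lookup g \<mu>)) *
     (\<Sum>\<nu>\<in>Poly_Mapping.keys h. Poly_Mapping.single \<nu> (Poly_Mapping.lookup h \<nu>))"
    by (subst (1) pm_expand[of g], subst (1) pm_expand[of h]) (rule refl)
  also have "\<dots> = (\<Sum>\<mu>\<in>Poly_Mapping.keys g. \<Sum>\<nu>\<in>Poly_Mapping.keys h.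
       Poly_Mapping.single (\<mu>+\<nu>) (Poly_Mapping.lookup g \<mu> * Poly_Mapping.lookup h \<nu>))"
    by (simp add: sum_distrib_left sum_distrib_right mult_single sum.swap[of _ "Poly_Mapping.keys h"])
  finally have "coord_eval (g*h) c = (\<Sum>\<mu>\<in>Poly_Mapping.keys g. \<Sum>\<nu>\<in>Poly_Mapping.keys h.
       Poly_Mapping.lookup g \<mu> * Poly_Mapping.lookup h \<nu> * (ev \<mu> c * ev \<nu> c))"
    by (simp add: coord_eval_sum coord_eval_single ev_add)
  also have "\<dots> = coord_eval g c * coord_eval h c"
    unfolding coord_eval_def ev_def[symmetric] sum_product
    by (intro sum.cong refl) (simp add: mult_ac)
  finally show ?thesis .
qed

definition cpf :: "monom set \<Rightarrow> ((monom \<Rightarrow> 'a::comm_ring_1) \<Rightarrow> 'a) \<Rightarrow> bool" where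
  "cpf A F \<longleftrightarrow> (\<exists>g. coord_poly_in A g \<and> (\<forall>c. coord_eval g c = F c))"

lemma cpf_const: "cpf A (\<lambda>c. k)"
  unfolding cpf_def
  by (rule exI[of _ "Poly_Mapping.single 0 k"]) (auto simp: coord_poly_in_def coord_eval_single)

lemma cpf_coord: "\<alpha> \<in> A \<Longrightarrow> cpf A (\<lambda>c. c \<alpha>)"
  unfolding cpf_def
  by (rule exI[of _ "Poly_Mapping.single (Poly_Mapping.single \<alpha> 1) 1"]) (auto simp: coord_poly_in_def coord_eval_single)

lemma cpf_add: "cpf A F \<Longrightarrow> cpf A G \<Longrightarrow> cpf A (\<lambda>c. F c + G c)"
  unfolding cpf_def coord_poly_in_def
  apply (elim exE conjE)
  subgoal for g h
    apply (rule exI[of _ "g + h"])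
    using keys_add[of g h] by (auto simp: coord_eval_add) blast
  done

lemma cpf_mult: "cpf A F \<Longrightarrow> cpf A G \<Longrightarrow> cpf A (\<lambda>c. F c * G c)"
proof -
  assume "cpf A F" "cpf A G"
  then obtain g h where g: "coord_poly_in A g" "\<forall>c. coord_eval g c = F c"
    and h: "coord_poly_in A h" "\<forall>c. coord_eval h c = G c"
    unfolding cpf_def by blast
  have "coord_poly_in A (g * h)"
    unfolding coord_poly_in_def
  proof
    fix \<mu> assume "\<mu> \<in> Poly_Mapping.keys (g * h)"
    then obtain a b where ab: "\<mu> = a + b" "a \<in> Poly_Mapping.keys g" "b \<in> Poly_Mapping.keys h"
      using keys_mult by blast
    have "Poly_Mapping.keys \<mu> \<subseteq> Poly_Mapping.keys a \<union> Poly_Mapping.keys b"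
      unfolding ab(1) by (rule keys_add)
    moreover have "Poly_Mapping.keys a \<subseteq> A" "Poly_Mapping.keys b \<subseteq> A"
      using g(1) h(1) ab unfolding coord_poly_in_def by auto
    ultimately show "Poly_Mapping.keys \<mu> \<subseteq> A" by blast
  qed
  moreover have "\<forall>c. coord_eval (g * h) c = F c * G c" using g h by (simp add: coord_eval_mult)
  ultimately show ?thesis unfolding cpf_def by blast
qed

lemma cpf_sum: "(\<And>i. i \<in> I \<Longrightarrow> cpf A (G i)) \<Longrightarrow> cpf A (\<lambda>c. \<Sum>i\<in>I. G i c)"
  by (induction I rule: infinite_finite_induct) (auto intro: cpf_const cpf_add)

lemma cpf_prod: "(\<And>i. i \<in> I \<Longrightarrow> cpf A (G i)) \<Longrightarrow> cpf A (\<lambda>c. \<Prod>i\<in>I. G i c)"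
  by (induction I rule: infinite_finite_induct) (auto intro: cpf_const cpf_mult)



lemma Var_power: "(Var j :: 'a::comm_ring_1 mpoly) ^ k = Poly_Mapping.single (Poly_Mapping.single j k) 1"
  by (induction k) (simp_all add: Var_def mult_single single_add[symmetric])

lemma prod_single1:
  "(\<Prod>j\<in>S. Poly_Mapping.single (f j) (1::'a::comm_ring_1)) = Poly_Mapping.single (\<Sum>j\<in>S. f j) 1"
  by (induction S rule: infinite_finite_induct) (simp_all add: mult_single)

definition pmon :: "(nat \<Rightarrow> nat) \<Rightarrow> monom \<Rightarrow> monom" where
  "pmon \<sigma> \<alpha> = (\<Sum>j\<in>Poly_Mapping.keys \<alpha>. Poly_Mapping.single (\<sigma> j) (Poly_Mapping.lookup \<alpha> j))"

lemma perm_act_superset: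
  assumes "finite S" "Poly_Mapping.keys p \<subseteq> S"
  shows "perm_act \<sigma> (p :: 'a::comm_ring_1 mpoly) = (\<Sum>\<alpha>\<in>S. Poly_Mapping.single (pmon \<sigma> \<alpha>) (Poly_Mapping.lookup p \<alpha>))"
proof -
  have "perm_act \<sigma> p = (\<Sum>\<alpha>\<in>Poly_Mapping.keys p. Poly_Mapping.single (pmon \<sigma> \<alpha>) (Poly_Mapping.lookup p \<alpha>))"
    unfolding perm_act_def Var_power prod_single1 Mon_def pmon_def
    by (simp add: mult_single)
  also have "\<dots> = (\<Sum>\<alpha>\<in>S. Poly_Mapping.single (pmon \<sigma> \<alpha>) (Poly_Mapping.lookup p \<alpha>))"
    by (rule sum.mono_neutral_left) (auto simp: assms in_keys_iff)
  finally show ?thesis .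
qed

lemma mdeg_superset:
  assumes "finite S" "Poly_Mapping.keys \<alpha> \<subseteq> S"
  shows "mdeg \<alpha> = (\<Sum>j\<in>S. Poly_Mapping.lookup \<alpha> j)"
  unfolding mdeg_def by (rule sum.mono_neutral_left) (auto simp: assms in_keys_iff)

lemma mdeg_add: "mdeg (a + b) = mdeg a + mdeg b"
proof -
  let ?S = "Poly_Mapping.keys a \<union> Poly_Mapping.keys b"
  have "mdeg (a+b) = (\<Sum>j\<in>?S. Poly_Mapping.lookup (a+b) j)"
    by (rule mdeg_superset) (auto simp: keys_add)
  also have "\<dots> = (\<Sum>j\<in>?S. Poly_Mapping.lookup a j) + (\<Sum>j\<in>?S. Poly_Mapping.lookup b j)"
    by (simp add: lookup_add sum.distrib)
  also have "\<dots> = mdeg a + mdeg b"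
    by (subst (1 2) mdeg_superset[of ?S]) auto
  finally show ?thesis .
qed

lemma mdeg_zero[simp]: "mdeg 0 = 0" by (simp add: mdeg_def)
lemma mdeg_single[simp]: "mdeg (Poly_Mapping.single j k) = k" by (simp add: mdeg_def)

lemma mdeg_sum: "mdeg (\<Sum>i\<in>I. f i) = (\<Sum>i\<in>I. mdeg (f i))"
  by (induction I rule: infinite_finite_induct) (simp_all add: mdeg_add)

lemma mdeg_pmon: "mdeg (pmon \<sigma> \<alpha>) = mdeg \<alpha>"
  by (simp only: pmon_def mdeg_sum mdeg_single) (simp add: mdeg_def)

lemma keys_pmon: "Poly_Mapping.keys (pmon \<sigma> \<alpha>) \<subseteq> \<sigma> ` Poly_Mapping.keys \<alpha>"
proof -
  have "Poly_Mapping.keys (pmon \<sigma> \<alpha>) \<subseteq> (\<Union>j\<in>Poly_Mapping.keys \<alpha>. Poly_Mapping.keys (Poly_Mapping.single (\<sigma> j) (Poly_Mapping.lookup \<alpha> j)))"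
    unfolding pmon_def by (rule keys_sum)
  thus ?thesis by (auto split: if_splits)
qed

lemma pmon_single: "pmon \<sigma> (Poly_Mapping.single i k) = Poly_Mapping.single (\<sigma> i) k"
  by (simp add: pmon_def)

lemma mon_vars_in_pmon:
  assumes "\<sigma> permutes {..<n}" "mon_vars_in n \<alpha>"
  shows "mon_vars_in n (pmon \<sigma> \<alpha>)"
  using keys_pmon[of \<sigma> \<alpha>] assms permutes_in_image[OF assms(1)]
  unfolding mon_vars_in_def by fastforce

lemma mon_vars_in_add: "mon_vars_in n a \<Longrightarrow> mon_vars_in n b \<Longrightarrow> mon_vars_in n (a + b)"
  unfolding mon_vars_in_def using keys_add[of a b] by auto

lemma poly_vars_in_add: "poly_vars_in n p \<Longrightarrow> poly_vars_in n q \<Longrightarrow> poly_vars_in n (p + q)"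
  unfolding poly_vars_in_def using keys_add[of p q] by auto

lemma poly_vars_in_mult: "poly_vars_in n p \<Longrightarrow> poly_vars_in n q \<Longrightarrow> poly_vars_in n (p * q)"
  unfolding poly_vars_in_def
proof
  fix \<mu> assume "\<forall>\<alpha>\<in>Poly_Mapping.keys p. mon_vars_in n \<alpha>" "\<forall>\<alpha>\<in>Poly_Mapping.keys q. mon_vars_in n \<alpha>"
    "\<mu> \<in> Poly_Mapping.keys (p * q)"
  moreover from this(3) obtain a b where "\<mu> = a + b" "a \<in> Poly_Mapping.keys p" "b \<in> Poly_Mapping.keys q"
    using keys_mult by blast
  ultimately show "mon_vars_in n \<mu>" by (simp add: mon_vars_in_add)
qed

lemma poly_vars_in_single: "mon_vars_in n \<alpha> \<Longrightarrow> poly_vars_in n (Poly_Mapping.single \<alpha> a)"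
  unfolding poly_vars_in_def by simp

lemma poly_vars_in_zero[simp]: "poly_vars_in n 0"
  unfolding poly_vars_in_def by simp

lemma mon_vars_in_zero[simp]: "mon_vars_in n 0"
  unfolding mon_vars_in_def by simp

lemma poly_vars_in_one[simp]: "poly_vars_in n 1"
  unfolding poly_vars_in_def by simp

lemma ideal_gen_zero: "0 \<in> ideal_gen n G"
  unfolding ideal_gen_def by (rule CollectI, rule exI[of _ "{}"]) auto

lemma ideal_gen_gen: "g \<in> G \<Longrightarrow> g \<in> ideal_gen n G"
  unfolding ideal_gen_def by (rule CollectI, rule exI[of _ "{g}"], rule exI[of _ "\<lambda>_. 1"]) auto

lemma ideal_gen_add:
  assumes "p \<in> ideal_gen n G" "q \<in> ideal_gen n G"
  shows "p + q \<in> ideal_gen n G"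
proof -
  obtain F1 h1 where 1: "p = (\<Sum>g\<in>F1. h1 g * g)" "finite F1" "F1 \<subseteq> G" "\<forall>g\<in>F1. poly_vars_in n (h1 g)"
    using assms(1) unfolding ideal_gen_def by blast
  obtain F2 h2 where 2: "q = (\<Sum>g\<in>F2. h2 g * g)" "finite F2" "F2 \<subseteq> G" "\<forall>g\<in>F2. poly_vars_in n (h2 g)"
    using assms(2) unfolding ideal_gen_def by blast
  define h where "h g = (if g \<in> F1 then h1 g else 0) + (if g \<in> F2 then h2 g else 0)" for g
  have "(\<Sum>g\<in>F1 \<union> F2. h g * g) = (\<Sum>g\<in>F1 \<union> F2. (if g \<in> F1 then h1 g * g else 0)) + (\<Sum>g\<in>F1 \<union> F2. (if g \<in> F2 then h2 g * g else 0))"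
    unfolding sum.distrib[symmetric] by (rule sum.cong) (auto simp: h_def distrib_right)
  also have "\<dots> = p + q"
    using 1 2 by (simp add: sum.If_cases Int_absorb1 Int_absorb2)
  finally have "p + q = (\<Sum>g\<in>F1 \<union> F2. h g * g)" by simp
  moreover have "\<forall>g\<in>F1 \<union> F2. poly_vars_in n (h g)"
    using 1 2 unfolding h_def by (auto intro!: poly_vars_in_add)
  ultimately show ?thesis using 1 2 unfolding ideal_gen_def
    by (intro CollectI exI[of _ "F1 \<union> F2"] exI[of _ h]) auto
qed

lemma ideal_gen_mult:
  assumes "p \<in> ideal_gen n G" "poly_vars_in n q"
  shows "q * p \<in> ideal_gen n G"
proof -
  obtain F1 h1 where 1: "p = (\<Sum>g\<in>F1. h1 g * g)" "finite F1" "F1 \<subseteq> G" "\<forall>g\<in>F1. poly_vars_in n (h1 g)"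
    using assms(1) unfolding ideal_gen_def by blast
  have "q * p = (\<Sum>g\<in>F1. (q * h1 g) * g)" using 1 by (simp add: sum_distrib_left mult.assoc)
  moreover have "\<forall>g\<in>F1. poly_vars_in n (q * h1 g)" using 1 assms(2) by (auto intro: poly_vars_in_mult)
  ultimately show ?thesis using 1 unfolding ideal_gen_def
    by (intro CollectI exI[of _ F1] exI[of _ "\<lambda>g. q * h1 g"]) auto
qed

lemma ideal_gen_sum: "(\<And>i. i \<in> I \<Longrightarrow> f i \<in> ideal_gen n G) \<Longrightarrow> (\<Sum>i\<in>I. f i) \<in> ideal_gen n G"
  by (induction I rule: infinite_finite_induct) (auto intro: ideal_gen_zero ideal_gen_add)



lemma lookup_scale: "Poly_Mapping.lookup (Poly_Mapping.single 0 a * p) s = (a::'a::comm_ring_1) * Poly_Mapping.lookup p s"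
proof -
  have "Poly_Mapping.single 0 a * p = (\<Sum>\<mu>\<in>Poly_Mapping.keys p. Poly_Mapping.single \<mu> (a * Poly_Mapping.lookup p \<mu>))"
    by (subst pm_expand[of p]) (simp add: sum_distrib_left mult_single)
  also have "Poly_Mapping.lookup \<dots> s = a * Poly_Mapping.lookup p s"
    by (cases "s \<in> Poly_Mapping.keys p") (auto simp: lookup_sum lookup_single when_def in_keys_iff)
  finally show ?thesis .
qed

lemma mat_mult_entry:
  assumes "A \<in> carrier_mat N N" "B \<in> carrier_mat N N" "a < N" "t < N"
  shows "(A * B) $$ (a, t) = (\<Sum>k<N. A $$ (a, k) * B $$ (k, t))"
  using assms by (simp add: scalar_prod_def atLeast0LessThan)

lemma lookup_poc: "finite A \<Longrightarrow> Poly_Mapping.lookup (poly_of_coeffs A c) \<beta> = (if \<beta> \<in> A then c \<beta> else 0)"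
  unfolding poly_of_coeffs_def Mon_def by (simp add: lookup_sum lookup_single when_def)

lemma keys_poc: "finite A \<Longrightarrow> Poly_Mapping.keys (poly_of_coeffs A c) \<subseteq> A"
  by (auto simp: in_keys_iff lookup_poc split: if_splits)

lemma cpf_if: "\<alpha> \<in> A \<Longrightarrow> cpf A (\<lambda>c. if P then c \<alpha> else 0)"
  by (cases P) (simp_all add: cpf_coord cpf_const)

lemma lookup_le_mdeg: "Poly_Mapping.lookup m j \<le> mdeg m"
  unfolding mdeg_def
  by (cases "j \<in> Poly_Mapping.keys m") (auto intro: member_le_sum simp: in_keys_iff)

lemma finite_MD: "finite {m. mon_vars_in n m \<and> mdeg m = D}"
proof -
  let ?MD = "{m. mon_vars_in n m \<and> mdeg m = D}"
  let ?f = "\<lambda>m. map (Poly_Mapping.lookup m) [0..<n]"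
  have "inj_on ?f ?MD"
  proof (rule inj_onI)
    fix m1 m2 assume m: "m1 \<in> ?MD" "m2 \<in> ?MD" "?f m1 = ?f m2"
    show "m1 = m2"
    proof (rule poly_mapping_eqI)
      fix j
      show "Poly_Mapping.lookup m1 j = Poly_Mapping.lookup m2 j"
      proof (cases "j < n")
        case True
        then show ?thesis using m(3) by (metis (no_types, lifting) map_eq_conv atLeastLessThan_iff set_upt zero_le)
      next
        case False
        have "j \<notin> Poly_Mapping.keys m1" "j \<notin> Poly_Mapping.keys m2"
          using False m(1,2) unfolding mon_vars_in_def by auto
        then show ?thesis by (simp add: in_keys_iff)
      qed
    qed
  qed
  moreover have "?f ` ?MD \<subseteq> {xs. set xs \<subseteq> {..D} \<and> length xs = n}"
    proof
    fix xs assume "xs \<in> ?f ` ?MD"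
    then obtain m where "m \<in> ?MD" "xs = ?f m" by blast
    then show "xs \<in> {xs. set xs \<subseteq> {..D} \<and> length xs = n}"
      using lookup_le_mdeg[of m] by auto
  qed
  moreover have "finite {xs. set xs \<subseteq> {..D::nat} \<and> length xs = n}"
    by (rule finite_lists_length_eq) simp
  ultimately show ?thesis by (meson finite_imageD finite_subset)
qed



lemma main:
  fixes n d i :: nat and A :: "monom set" and fs :: "'a::field mpoly list"
  assumes d1: "d \<ge> 1" and finA: "finite A"
    and Ad: "\<forall>\<alpha>\<in>A. mon_vars_in n \<alpha> \<and> mdeg \<alpha> = d"
    and i: "i < n" and iA: "Poly_Mapping.single i d \<in> A"
  shows "holds_generally A (\<lambda>c :: monom \<Rightarrow> 'a.
           radical_contains_irrelevant n
             (ideal_gen n (\<Union>f\<in>set (poly_of_coeffs A c # fs). orbit n f)))"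
proof -
  define D where "D = n * (d - 1) + 1"
  define MD where "MD = {m. mon_vars_in n m \<and> mdeg m = D}"
  have finMD: "finite MD" unfolding MD_def by (rule finite_MD)
  define jj where "jj m = (SOME j. j < n \<and> d \<le> Poly_Mapping.lookup m j)" for m
  have jj: "jj m < n \<and> d \<le> Poly_Mapping.lookup m (jj m)" if m: "m \<in> MD" for m
  proof -
    have "\<exists>j. j < n \<and> d \<le> Poly_Mapping.lookup m j"
    proof (rule ccontr)
      assume "\<not> ?thesis"
      hence lt: "\<forall>j\<in>{..<n}. Poly_Mapping.lookup m j \<le> d - 1" by auto
      have "mdeg m = (\<Sum>j\<in>{..<n}. Poly_Mapping.lookup m j)"
        using m unfolding MD_def mon_vars_in_def by (intro mdeg_superset) auto
      also have "\<dots> \<le> of_nat (card {..<n}) * (d - 1)"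
        by (rule sum_bounded_above) (use lt in auto)
      finally have "mdeg m \<le> n * (d - 1)" by simp
      thus False using m unfolding MD_def D_def by simp
    qed
    thus ?thesis unfolding jj_def by (rule someI_ex)
  qed
  define uu where "uu m = m - Poly_Mapping.single (jj m) d" for m
  have uu_eq: "Poly_Mapping.single (jj m) d + uu m = m" if "m \<in> MD" for m
  proof (rule poly_mapping_eqI)
    fix k show "Poly_Mapping.lookup (Poly_Mapping.single (jj m) d + uu m) k = Poly_Mapping.lookup m k"
      using jj[OF that] unfolding uu_def
      by (cases "k = jj m") (auto simp: lookup_add lookup_minus lookup_single when_def)
  qed
  have uu_vars: "mon_vars_in n (uu m)" if "m \<in> MD" for m
  proof -
    have "Poly_Mapping.keys (uu m) \<subseteq> Poly_Mapping.keys m"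
      unfolding uu_def by (auto simp: in_keys_iff lookup_minus)
    thus ?thesis using that unfolding MD_def mon_vars_in_def by auto
  qed
  have uu_deg: "mdeg (uu m) + d = D" if "m \<in> MD" for m
    using arg_cong[OF uu_eq[OF that], of mdeg] that unfolding MD_def by (simp add: mdeg_add)
  define tau where "tau m = transpose i (jj m)" for m
  have tau: "tau m permutes {..<n}" if "m \<in> MD" for m
    unfolding tau_def using jj[OF that] i by (intro permutes_swap_id) auto
  have pmon_in: "pmon (tau m) \<alpha> + uu m \<in> MD" if "m \<in> MD" "\<alpha> \<in> A" for m \<alpha>
    unfolding MD_def using Ad that uu_deg[OF that(1)] mdeg_pmon[of "tau m" \<alpha>]
    by (auto simp: mdeg_add intro!: mon_vars_in_add mon_vars_in_pmon[OF tau] uu_vars)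
  define col where "col c m = perm_act (tau m) (poly_of_coeffs A c) * Mon (uu m) 1" for c :: "monom \<Rightarrow> 'a" and m
  define ent where "ent c s m = (\<Sum>\<alpha>\<in>A. if pmon (tau m) \<alpha> + uu m = s then c \<alpha> else 0)" for c :: "monom \<Rightarrow> 'a" and s m
  have col_eq: "col c m = (\<Sum>\<alpha>\<in>A. Poly_Mapping.single (pmon (tau m) \<alpha> + uu m) (c \<alpha>))" for c m
    unfolding col_def perm_act_superset[OF finA keys_poc[OF finA]] Mon_def
    by (simp add: lookup_poc[OF finA] sum_distrib_right mult_single)
  have lookup_col: "Poly_Mapping.lookup (col c m) s = ent c s m" for c m s
    unfolding col_eq ent_def by (simp add: lookup_sum lookup_single when_def)
  have ent_out: "ent c s m = 0" if "m \<in> MD" "s \<notin> MD" for c s m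
    unfolding ent_def using pmon_in[OF that(1)] that(2) by (intro sum.neutral) auto
  define I where "I c = ideal_gen n (\<Union>f\<in>set (poly_of_coeffs A c # fs). orbit n f)" for c :: "monom \<Rightarrow> 'a"
  have col_I: "col c m \<in> I c" if "m \<in> MD" for c m
  proof -
    have "perm_act (tau m) (poly_of_coeffs A c) \<in> I c"
      unfolding I_def orbit_def using tau[OF that] by (intro ideal_gen_gen) auto
    hence "Mon (uu m) 1 * perm_act (tau m) (poly_of_coeffs A c) \<in> I c"
      unfolding I_def Mon_def by (intro ideal_gen_mult poly_vars_in_single uu_vars that)
    thus ?thesis unfolding col_def by (simp add: mult.commute)
  qed
  obtain ms where ms: "set ms = MD" "distinct ms" using finite_distinct_list[OF finMD] by blast
  define N where "N = length ms"
  have msMD: "ms ! k \<in> MD" if "k < N" for k using that ms unfolding N_def by auto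
  define Mc where "Mc c = mat N N (\<lambda>(a,b). ent c (ms ! a) (ms ! b))" for c
  have Mc_car: "Mc c \<in> carrier_mat N N" for c unfolding Mc_def by simp
  have "cpf A (\<lambda>c. det (Mc c))"
  proof -
    have "(\<lambda>c. det (Mc c)) = (\<lambda>c. \<Sum>p\<in>{p. p permutes {0..<N}}. of_int (signof p) * (\<Prod>a\<in>{0..<N}. ent c (ms ! a) (ms ! p a)))"
    proof
      fix c
      show "det (Mc c) = (\<Sum>p\<in>{p. p permutes {0..<N}}. of_int (signof p) * (\<Prod>a\<in>{0..<N}. ent c (ms ! a) (ms ! p a)))"
        unfolding det_def'[OF Mc_car]
      proof (intro sum.cong refl arg_cong2[where f = "(*)"] prod.cong)
        fix p a assume "p \<in> {p. p permutes {0..<N}}" "a \<in> {0..<N}"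
        hence "p a < N" using permutes_in_image by fastforce
        thus "Mc c $$ (a, p a) = ent c (ms ! a) (ms ! p a)" using \<open>a \<in> {0..<N}\<close> unfolding Mc_def by simp
      qed simp
    qed
    moreover have "cpf A (\<lambda>c. \<Sum>p\<in>{p. p permutes {0..<N}}. of_int (signof p) * (\<Prod>a\<in>{0..<N}. ent c (ms ! a) (ms ! p a)))"
      unfolding ent_def
      by (intro cpf_sum cpf_mult cpf_const cpf_prod) (auto intro!: cpf_if)
    ultimately show ?thesis by simp
  qed
  then obtain g where g: "coord_poly_in A g" "\<And>c. coord_eval g c = det (Mc c)"
    unfolding cpf_def by blast
  define e where "e \<alpha> = (if \<alpha> = Poly_Mapping.single i d then 1 else (0::'a))" for \<alpha>
  have ent_e: "ent e s m = (if s = m then 1 else 0)" if "m \<in> MD" for s m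
  proof -
    have "ent e s m = (\<Sum>\<alpha>\<in>A. if \<alpha> = Poly_Mapping.single i d then (if pmon (tau m) (Poly_Mapping.single i d) + uu m = s then 1 else 0) else 0)"
      unfolding ent_def e_def by (intro sum.cong refl) auto
    also have "\<dots> = (if pmon (tau m) (Poly_Mapping.single i d) + uu m = s then 1 else 0)"
      using iA finA by (simp add: sum.delta)
    also have "pmon (tau m) (Poly_Mapping.single i d) + uu m = m"
      unfolding pmon_single tau_def using uu_eq[OF that] by simp
    finally show ?thesis by auto
  qed
  have "Mc e = 1\<^sub>m N"
  proof (rule eq_matI)
    fix a b assume ab: "a < dim_row (1\<^sub>m N)" "b < dim_col (1\<^sub>m N)"
    hence "ms ! a = ms ! b \<longleftrightarrow> a = b" using ms(2) unfolding N_def by (simp add: nth_eq_iff_index_eq)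
    thus "Mc e $$ (a, b) = 1\<^sub>m N $$ (a, b)" using ab msMD unfolding Mc_def by (auto simp: ent_e)
  qed (auto simp: Mc_def)
  hence ge: "coord_eval g e = 1" using g(2) by simp
  show ?thesis
    unfolding holds_generally_def
  proof (intro exI[of _ g] conjI allI impI)
    show "coord_poly_in A g" by (rule g(1))
    show "\<exists>c. coord_eval g c \<noteq> 0" using ge by (intro exI[of _ e]) simp
  next
    fix c :: "monom \<Rightarrow> 'a" assume "coord_eval g c \<noteq> 0"
    hence dne: "det (Mc c) \<noteq> 0" using g(2) by simp
    define B where "B = adj_mat (Mc c)"
    have B: "B \<in> carrier_mat N N" "Mc c * B = det (Mc c) \<cdot>\<^sub>m 1\<^sub>m N"
      unfolding B_def using adj_mat[OF Mc_car] by auto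
    show "radical_contains_irrelevant n (ideal_gen n (\<Union>f\<in>set (poly_of_coeffs A c # fs). orbit n f))"
      unfolding radical_contains_irrelevant_def
    proof (intro allI impI)
      fix j assume j: "j < n"
      define r where "r = Poly_Mapping.single j D"
      have rMD: "r \<in> MD" unfolding MD_def r_def mon_vars_in_def using j by simp
      then obtain t where t: "t < N" "ms ! t = r" using ms(1) unfolding N_def by (metis in_set_conv_nth)
      define P where "P = (\<Sum>k<N. Poly_Mapping.single 0 (B $$ (k, t) / det (Mc c)) * col c (ms ! k))"
      have PI: "P \<in> I c"
        unfolding P_def I_def
      proof (rule ideal_gen_sum)
        fix k assume "k \<in> {..<N}"
        hence "col c (ms ! k) \<in> I c" by (intro col_I msMD) auto
        thus "Poly_Mapping.single 0 (B $$ (k, t) / det (Mc c)) * col c (ms ! k) \<in> ideal_gen n (\<Union>f\<in>set (poly_of_coeffs A c # fs). orbit n f)"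
          unfolding I_def by (intro ideal_gen_mult poly_vars_in_single) simp_all
      qed
      have "P = Poly_Mapping.single r 1"
      proof (rule poly_mapping_eqI)
        fix s
        have lP: "Poly_Mapping.lookup P s = (\<Sum>k<N. B $$ (k, t) / det (Mc c) * ent c s (ms ! k))"
          unfolding P_def by (simp add: lookup_sum lookup_scale lookup_col)
        show "Poly_Mapping.lookup P s = Poly_Mapping.lookup (Poly_Mapping.single r 1) s"
        proof (cases "s \<in> MD")
          case True
          then obtain a where a: "a < N" "ms ! a = s" using ms(1) unfolding N_def by (metis in_set_conv_nth)
          have "Poly_Mapping.lookup P s = (\<Sum>k<N. Mc c $$ (a, k) * B $$ (k, t)) / det (Mc c)"
            unfolding lP sum_divide_distrib using a msMD unfolding Mc_def by (intro sum.cong refl) auto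
          also have "\<dots> = (Mc c * B) $$ (a, t) / det (Mc c)"
            using mat_mult_entry[OF Mc_car B(1) a(1) t(1)] by simp
          also have "\<dots> = (if a = t then 1 else 0)"
            using B(2) a t dne by simp
          also have "\<dots> = (if s = r then 1 else 0)"
            using a t ms(2) unfolding N_def by (auto simp: nth_eq_iff_index_eq)
          finally show ?thesis by (simp add: lookup_single when_def eq_commute)
        next
          case False
          have "Poly_Mapping.lookup P s = 0" unfolding lP using ent_out[OF msMD False] by simp
          moreover have "s \<noteq> r" using False rMD by auto
          ultimately show ?thesis by (simp add: lookup_single when_def)
        qed
      qed
      hence "Var j ^ D \<in> I c" using PI unfolding Var_power r_def by simp
      thus "\<exists>k. Var j ^ k \<in> ideal_gen n (\<Union>f\<in>set (poly_of_coeffs A c # fs). orbit n f)"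
        unfolding I_def by blast
    qed
  qed
qed


theorem corollary1p3:
  fixes n d :: nat
    and A :: "monom set"
    and fs :: "'a::field mpoly list"
  assumes "infinite (UNIV :: 'a set)"
    and "d \<ge> 1"
    and "finite A"
    and "\<forall>\<alpha>\<in>A. mon_vars_in n \<alpha> \<and> mdeg \<alpha> = d"
    and "\<exists>i<n. Poly_Mapping.single i d \<in> A"
    and "\<forall>f\<in>set fs. poly_vars_in n f \<and> (\<exists>e. homogeneous e f)"
  shows "holds_generally A (\<lambda>c :: monom \<Rightarrow> 'a.
           radical_contains_irrelevant n
             (ideal_gen n (\<Union>f\<in>set (poly_of_coeffs A c # fs). orbit n f)))"
proof -
  obtain i where "i < n" "Poly_Mapping.single i d \<in> A" using assms(5) by blast
  thus ?thesis using main[OF assms(2,3,4)] by blast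
qed

end
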